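(* Let $0<s_1<s_2<1$, $2s_1<d<\frac{2s_1s_2}{s_2-s_1}$, $a>0$, and suppose $g$ satisfies $(G_1)$–$(G_3)$. Then $I$ restricted to $\mathcal{P}_{\infty,a}$ is coercive: $I(u)\to+\infty$ as $\|u\|\to\infty$ with $u\in\mathcal{P}_{\infty,a}$.
   Context: For $s\in(0,1)$, $|\nabla_s u|_2^2=\int_{\mathbb{R}^d\times\mathbb{R}^d}\frac{|u(x)-u(y)|^2}{|x-y|^{d+2s}}dx\,dy$; $|\cdot|_p$ is the $L^p(\mathbb{R}^d)$ norm; $H^{s_1,s_2}(\mathbb{R}^d)=\{u\in L^2(\mathbb{R}^d):|\nabla_{s_1}u|_2<\infty,\ |\nabla_{s_2}u|_2<\infty\}$ with norm $\|u\|^2=|\nabla_{s_1}u|_2^2+|\nabla_{s_2}u|_2^2+|u|_2^2$. $S_a=\{u\in H^{s_1,s_2}(\mathbb{R}^d):|u|_2^2=a\}$. $g:\mathbb{R}\to\mathbb{R}$, $G(s)=\int_0^sg$, $\widetilde G(s)=\frac12g(s)s-G(s)$. $(G_1)$: $g$ continuous, odd. $(G_2)$: there exist $\alpha,\beta$ with $2+\frac{4s_2}{d}<\alpha<\beta<\frac{2d}{d-2s_1}$ and $\alpha G(s)\le g(s)s\le\beta G(s)$ for all $s$. $(G_3)$: $\widetilde G'$ exists and $\widetilde G'(s)s\ge\alpha\widetilde G(s)$ for all $s$. $I(u)=\frac12|\nabla_{s_1}u|_2^2+\frac12|\nabla_{s_2}u|_2^2-\int_{\mathbb{R}^d}G(u)dx$;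 $P_\infty(u)=s_1|\nabla_{s_1}u|_2^2+s_2|\nabla_{s_2}u|_2^2-d\int_{\mathbb{R}^d}\widetilde G(u)dx$; $\mathcal{P}_{\infty,a}=\{u\in S_a:P_\infty(u)=0\}$. *)

theory Defs
  imports "HOL-Analysis.Analysis"
begin

text \<open>Ambient space: an arbitrary Euclidean space 'a of dimension d = DIM('a), with Lebesgue (Borel) measure.\<close>

definition Gagliardo :: "real \<Rightarrow> ('a::euclidean_space \<Rightarrow> real) \<Rightarrow> ennreal" where
  "Gagliardo s u = (\<integral>\<^sup>+ z. ennreal ((u (fst z) - u (snd z))\<^sup>2
       / norm (fst z - snd z) powr (real DIM('a) + 2 * s)) \<partial>(lborel \<Otimes>\<^sub>M lborel))"

text \<open>The squared seminorm |nabla_s u|_2^2 (as a real number; finite on the space H).\<close>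
definition frac_sq :: "real \<Rightarrow> ('a::euclidean_space \<Rightarrow> real) \<Rightarrow> real" where
  "frac_sq s u = enn2real (Gagliardo s u)"

definition L2sq :: "('a::euclidean_space \<Rightarrow> real) \<Rightarrow> real" where
  "L2sq u = (\<integral>x. (u x)\<^sup>2 \<partial>lborel)"

definition Hspace :: "real \<Rightarrow> real \<Rightarrow> ('a::euclidean_space \<Rightarrow> real) set" where
  "Hspace s1 s2 = {u. u \<in> borel_measurable lborel \<and> integrable lborel (\<lambda>x. (u x)\<^sup>2)
      \<and> Gagliardo s1 u < \<infinity> \<and> Gagliardo s2 u < \<infinity>}"

definition Hnorm :: "real \<Rightarrow> real \<Rightarrow> ('a::euclidean_space \<Rightarrow> real) \<Rightarrow> real" where
  "Hnorm s1 s2 u = sqrt (frac_sq s1 u + frac_sq s2 u + L2sq u)"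

definition Sa :: "real \<Rightarrow> real \<Rightarrow> real \<Rightarrow> ('a::euclidean_space \<Rightarrow> real) set" where
  "Sa s1 s2 a = {u \<in> Hspace s1 s2. L2sq u = a}"

definition Gprim :: "(real \<Rightarrow> real) \<Rightarrow> real \<Rightarrow> real" where
  "Gprim g s = (LBINT t=0..s. g t)"

definition Gtil :: "(real \<Rightarrow> real) \<Rightarrow> real \<Rightarrow> real" where
  "Gtil g s = g s * s / 2 - Gprim g s"

definition Ifun :: "real \<Rightarrow> real \<Rightarrow> (real \<Rightarrow> real) \<Rightarrow> ('a::euclidean_space \<Rightarrow> real) \<Rightarrow> real" where
  "Ifun s1 s2 g u = frac_sq s1 u / 2 + frac_sq s2 u / 2 - (\<integral>x. Gprim g (u x) \<partial>lborel)"

definition Pinf :: "real \<Rightarrow> real \<Rightarrow> (real \<Rightarrow> real) \<Rightarrow> ('a::euclidean_space \<Rightarrow> real) \<Rightarrow> real" where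
  "Pinf s1 s2 g u = s1 * frac_sq s1 u + s2 * frac_sq s2 u
      - real DIM('a) * (\<integral>x. Gtil g (u x) \<partial>lborel)"

definition Pset :: "real \<Rightarrow> real \<Rightarrow> (real \<Rightarrow> real) \<Rightarrow> real \<Rightarrow> ('a::euclidean_space \<Rightarrow> real) set" where
  "Pset s1 s2 g a = {u \<in> Sa s1 s2 a. Pinf s1 s2 g u = 0}"

end

theory Submission
  imports Defs
begin

theorem lemma3p4:
  fixes s1 s2 a \<alpha> \<beta> :: real and g :: "real \<Rightarrow> real"
  assumes "0 < s1" "s1 < s2" "s2 < 1"
    and "2 * s1 < real DIM('a::euclidean_space)"
    and "real DIM('a) < 2 * s1 * s2 / (s2 - s1)"
    and "0 < a"
    and G1: "continuous_on UNIV g" "\<And>s. g (- s) = - g s"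
    and G2: "2 + 4 * s2 / real DIM('a) < \<alpha>" "\<alpha> < \<beta>"
            "\<beta> < 2 * real DIM('a) / (real DIM('a) - 2 * s1)"
            "\<And>s. \<alpha> * Gprim g s \<le> g s * s" "\<And>s. g s * s \<le> \<beta> * Gprim g s"
    and G3: "\<And>s. Gtil g differentiable (at s)"
            "\<And>s. deriv (Gtil g) s * s \<ge> \<alpha> * Gtil g s"
  shows "\<forall>M. \<exists>R. \<forall>u \<in> (Pset s1 s2 g a :: ('a \<Rightarrow> real) set).
           Hnorm s1 s2 u \<ge> R \<longrightarrow> Ifun s1 s2 g u \<ge> M"
proof
  fix M :: real
  define d where "d = real DIM('a)"
  have dpos: "d > 0" unfolding d_def by simp
  have a2: "\<alpha> > 2" 
  proof -
    have "4 * s2 / d > 0" using dpos assms(1,2) by simp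
    then show ?thesis using G2(1) unfolding d_def by linarith
  qed
  define k where "k = 2 / (\<alpha> - 2)"
  have kpos: "k > 0" using a2 unfolding k_def by simp
  have Gnn: "Gprim g s \<ge> 0" for s 
  proof -
    have "(\<beta> - \<alpha>) * Gprim g s \<ge> 0" using G2(4)[of s] G2(5)[of s] by (simp add: algebra_simps)
    then show ?thesis using G2(2) by (simp add: zero_le_mult_iff)
  qed
  have Gle: "Gprim g s \<le> k * Gtil g s" for s
  proof -
    have "Gtil g s \<ge> (\<alpha>/2 - 1) * Gprim g s" using G2(4)[of s] unfolding Gtil_def by (simp add: algebra_simps)
    then have "k * Gtil g s \<ge> k * ((\<alpha>/2 - 1) * Gprim g s)" using kpos by (simp add: mult_left_mono)
    also have "k * ((\<alpha>/2 - 1) * Gprim g s) = Gprim g s" unfolding k_def using a2 by (simp add: field_simps)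
    finally show ?thesis .
  qed
  have Gtnn: "Gtil g s \<ge> 0" for s 
  proof -
    have "k * Gtil g s \<ge> 0" using Gle[of s] Gnn[of s] by linarith
    then show ?thesis using kpos by (simp add: zero_le_mult_iff)
  qed
  have Gtle: "Gtil g s \<le> (\<beta>/2 - 1) * Gprim g s" for s using G2(5)[of s] unfolding Gtil_def by (simp add: algebra_simps)
  have contGt: "continuous_on UNIV (Gtil g)"
    using G3(1) by (simp add: differentiable_imp_continuous_within continuous_at_imp_continuous_on)
  have Geq: "Gprim g = (\<lambda>s. g s * s / 2 - Gtil g s)" unfolding Gtil_def by auto
  have contG: "continuous_on UNIV (Gprim g)" unfolding Geq
    by (intro continuous_intros G1(1) contGt) auto
  have intle: "(\<integral>x. Gprim g (u x) \<partial>lborel) \<le> k * (\<integral>x. Gtil g (u x) \<partial>lborel)"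
    if um: "u \<in> borel_measurable (lborel :: 'a measure)" for u :: "'a \<Rightarrow> real"
  proof -
    have m1: "(\<lambda>x. Gprim g (u x)) \<in> borel_measurable lborel"
      using measurable_compose[OF um borel_measurable_continuous_onI[OF contG]] by (simp add: o_def)
    have m2: "(\<lambda>x. Gtil g (u x)) \<in> borel_measurable lborel"
      using measurable_compose[OF um borel_measurable_continuous_onI[OF contGt]] by (simp add: o_def)
    show ?thesis
    proof (cases "integrable lborel (\<lambda>x. Gprim g (u x))")
      case True
      have i2: "integrable lborel (\<lambda>x. (\<beta>/2 - 1) * Gprim g (u x))" using True by simp
      have "integrable lborel (\<lambda>x. Gtil g (u x))"
        by (rule Bochner_Integration.integrable_bound[OF i2 m2]) (use Gtle Gtnn Gnn a2 G2(2) in auto)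
      then have "(\<integral>x. Gprim g (u x) \<partial>lborel) \<le> (\<integral>x. k * Gtil g (u x) \<partial>lborel)"
        using True Gle by (intro integral_mono) auto
      then show ?thesis by simp
    next
      case False
      then have "(\<integral>x. Gprim g (u x) \<partial>lborel) = 0" by (simp add: not_integrable_integral_eq)
      moreover have "(\<integral>x. Gtil g (u x) \<partial>lborel) \<ge> 0" using Gtnn by (simp add: integral_nonneg_AE)
      ultimately show ?thesis using kpos by simp
    qed
  qed
  define c where "c = 1/2 - k * s2 / d"
  have cpos: "c > 0"
  proof -
    have "4 * s2 / d < \<alpha> - 2" using G2(1) unfolding d_def by simp
    then have "4 * s2 < (\<alpha> - 2) * d" using dpos by (simp add: field_simps)
    then show ?thesis unfolding c_def k_def using dpos a2 by (simp add: field_simps)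
  qed
  show "\<exists>R. \<forall>u \<in> (Pset s1 s2 g a :: ('a \<Rightarrow> real) set).
           Hnorm s1 s2 u \<ge> R \<longrightarrow> Ifun s1 s2 g u \<ge> M"
  proof (intro exI ballI impI)
    fix u :: "'a \<Rightarrow> real"
    assume uP: "u \<in> Pset s1 s2 g a" and hR: "Hnorm s1 s2 u \<ge> sqrt (\<bar>M\<bar> / c + a)"
    define A where "A = frac_sq s1 u"
    define B where "B = frac_sq s2 u"
    have A0: "A \<ge> 0" and B0: "B \<ge> 0" unfolding A_def B_def frac_sq_def by auto
    have um: "u \<in> borel_measurable lborel" and L: "L2sq u = a"
      and P: "s1 * A + s2 * B = d * (\<integral>x. Gtil g (u x) \<partial>lborel)"
      using uP unfolding Pset_def Sa_def Hspace_def Pinf_def A_def B_def d_def by auto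
    have "A + B + a \<ge> \<bar>M\<bar> / c + a"
      using hR L unfolding Hnorm_def A_def B_def by simp
    then have AB: "A + B \<ge> \<bar>M\<bar> / c" by simp
    have "(\<integral>x. Gprim g (u x) \<partial>lborel) \<le> k * ((s1 * A + s2 * B) / d)"
      using intle[OF um] P dpos by simp
    also have "\<dots> \<le> k * ((s2 * A + s2 * B) / d)"
      using kpos dpos A0 assms(2) by (intro mult_left_mono divide_right_mono) (auto intro: mult_right_mono)
    finally have I1: "A/2 + B/2 - k * ((s2 * A + s2 * B) / d) \<le> Ifun s1 s2 g u"
      unfolding Ifun_def A_def B_def by simp
    have "M \<le> \<bar>M\<bar>" by simp
    also have "\<bar>M\<bar> = c * (\<bar>M\<bar> / c)" using cpos by simp
    also have "\<dots> \<le> c * (A + B)" using mult_left_mono[OF AB, of c] cpos by simp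
    also have "\<dots> = A/2 + B/2 - k * ((s2 * A + s2 * B) / d)"
      unfolding c_def using dpos by (simp add: field_simps)
    also note I1
    finally show "Ifun s1 s2 g u \<ge> M" .
  qed
qed

end
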